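(* Let $f:\mathcal{C}\to\mathcal{D}$ be a morphism of codes. If $\mathcal{C}$ is intersection complete, then $f(\mathcal{C})$ is intersection complete. If $\mathcal{C}$ is max-intersection complete, then $f(\mathcal{C})$ is max-intersection complete.
   Context: A code is a subset $\mathcal{C}\subseteq 2^{[n]}$. For $\sigma\subseteq[n]$, $\mathrm{Tk}_{\mathcal{C}}(\sigma)=\{c\in\mathcal{C}\mid\sigma\subseteq c\}$; a trunk in $\mathcal{C}$ is a subset that is empty or of the form $\mathrm{Tk}_{\mathcal{C}}(\sigma)$. A function $f:\mathcal{C}\to\mathcal{D}$ between codes is a morphism if the preimage of every trunk in $\mathcal{D}$ is a trunk in $\mathcal{C}$. A code is intersection complete if $c_1\cap c_2\in\mathcal{C}$ for all $c_1,c_2\in\mathcal{C}$. A code is max-intersection complete if the intersection of any nonempty collection of maximal (under inclusion) codewords of $\mathcal{C}$ belongs to $\mathcal{C}$. *)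

theory Defs
  imports Main
begin

definition is_code :: "nat \<Rightarrow> nat set set \<Rightarrow> bool" where
  "is_code n C \<longleftrightarrow> C \<subseteq> Pow {1..n}"

definition Tk :: "nat set set \<Rightarrow> nat set \<Rightarrow> nat set set" where
  "Tk C \<sigma> = {c \<in> C. \<sigma> \<subseteq> c}"

definition is_trunk :: "nat \<Rightarrow> nat set set \<Rightarrow> nat set set \<Rightarrow> bool" where
  "is_trunk n C T \<longleftrightarrow> T = {} \<or> (\<exists>\<sigma>. \<sigma> \<subseteq> {1..n} \<and> T = Tk C \<sigma>)"

definition code_morphism ::
  "nat \<Rightarrow> nat set set \<Rightarrow> nat \<Rightarrow> nat set set \<Rightarrow> (nat set \<Rightarrow> nat set) \<Rightarrow> bool" where
  "code_morphism n C m D f \<longleftrightarrow>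
     (\<forall>c\<in>C. f c \<in> D) \<and>
     (\<forall>T. is_trunk m D T \<longrightarrow> is_trunk n C {c \<in> C. f c \<in> T})"

definition intersection_complete :: "nat set set \<Rightarrow> bool" where
  "intersection_complete C \<longleftrightarrow> (\<forall>c1\<in>C. \<forall>c2\<in>C. c1 \<inter> c2 \<in> C)"

definition max_codewords :: "nat set set \<Rightarrow> nat set set" where
  "max_codewords C = {c \<in> C. \<forall>c'\<in>C. c \<subseteq> c' \<longrightarrow> c' = c}"

definition max_intersection_complete :: "nat set set \<Rightarrow> bool" where
  "max_intersection_complete C \<longleftrightarrow>
     (\<forall>S. S \<subseteq> max_codewords C \<and> S \<noteq> {} \<longrightarrow> \<Inter>S \<in> C)"

end

theory Submission
  imports Defs
begin

lemma trunk_ne: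
  assumes "is_trunk n C T" "x \<in> T"
  obtains \<sigma> where "T = Tk C \<sigma>"
  using assms unfolding is_trunk_def by auto

lemma key:
  assumes D: "is_code m D" and fm: "code_morphism n C m D f"
    and A: "A \<subseteq> C" "A \<noteq> {}" and IA: "\<Inter>A \<in> C"
  shows "f (\<Inter>A) = \<Inter>(f ` A)"
proof -
  have fD: "\<And>c. c \<in> C \<Longrightarrow> f c \<subseteq> {1..m}"
    using D fm unfolding is_code_def code_morphism_def by blast
  have pre: "\<And>\<tau>. \<tau> \<subseteq> {1..m} \<Longrightarrow> is_trunk n C {c \<in> C. f c \<in> Tk D \<tau>}"
    using fm unfolding code_morphism_def is_trunk_def by blast
  have mono: "f c \<subseteq> f c'" if "c \<in> C" "c' \<in> C" "c \<subseteq> c'" for c c'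
  proof -
    have "is_trunk n C {x \<in> C. f x \<in> Tk D (f c)}" using pre fD that by blast
    moreover have "c \<in> {x \<in> C. f x \<in> Tk D (f c)}"
      using that fm unfolding code_morphism_def Tk_def by auto
    ultimately obtain \<sigma> where e: "{x \<in> C. f x \<in> Tk D (f c)} = Tk C \<sigma>"
      by (rule trunk_ne)
    have "c \<in> Tk C \<sigma>" using e \<open>c \<in> {x \<in> C. f x \<in> Tk D (f c)}\<close> by simp
    then have "\<sigma> \<subseteq> c'" using that by (simp add: Tk_def)
    then have "c' \<in> Tk C \<sigma>" using that by (simp add: Tk_def)
    then have "c' \<in> {x \<in> C. f x \<in> Tk D (f c)}" using e by simp
    then show ?thesis by (simp add: Tk_def)
  qed
  have "\<Inter>(f ` A) \<subseteq> {1..m}" using A fD by blast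
  then have "is_trunk n C {x \<in> C. f x \<in> Tk D (\<Inter>(f ` A))}" using pre by blast
  moreover have "A \<subseteq> {x \<in> C. f x \<in> Tk D (\<Inter>(f ` A))}"
    using A fm unfolding code_morphism_def Tk_def by auto
  moreover obtain a where "a \<in> A" using A by blast
  ultimately obtain \<sigma> where s: "{x \<in> C. f x \<in> Tk D (\<Inter>(f ` A))} = Tk C \<sigma>"
    by (meson subsetD trunk_ne)
  have "\<forall>a\<in>A. a \<in> Tk C \<sigma>" using s \<open>A \<subseteq> {x \<in> C. f x \<in> Tk D (\<Inter>(f ` A))}\<close> by auto
  then have "\<sigma> \<subseteq> \<Inter>A" by (auto simp: Tk_def)
  then have "\<Inter>A \<in> Tk C \<sigma>" using IA by (simp add: Tk_def)
  then have "\<Inter>A \<in> {x \<in> C. f x \<in> Tk D (\<Inter>(f ` A))}" using s by simp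
  then have "\<Inter>(f ` A) \<subseteq> f (\<Inter>A)" by (simp add: Tk_def)
  moreover have "f (\<Inter>A) \<subseteq> \<Inter>(f ` A)"
  proof (rule INF_greatest)
    fix a assume "a \<in> A"
    then show "f (\<Inter>A) \<subseteq> f a" using mono[of "\<Inter>A" a] A IA by (simp add: Inter_lower subsetD)
  qed
  ultimately show ?thesis by (rule equalityI[rotated])
qed

lemma monof:
  assumes D: "is_code m D" and fm: "code_morphism n C m D f"
    and "c \<in> C" "c' \<in> C" "c \<subseteq> c'"
  shows "f c \<subseteq> f c'"
proof -
  have "\<Inter>{c,c'} = c" using assms by blast
  then have "f c = \<Inter>(f ` {c,c'})" using key[OF D fm, of "{c,c'}"] assms by simp
  then show ?thesis by auto
qed

theorem theorem1p3:
  fixes n m :: nat and C D :: "nat set set" and f :: "nat set \<Rightarrow> nat set"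
  assumes "is_code n C" and "is_code m D"
    and "code_morphism n C m D f"
  shows "(intersection_complete C \<longrightarrow> intersection_complete (f ` C))
       \<and> (max_intersection_complete C \<longrightarrow> max_intersection_complete (f ` C))"
proof (intro conjI impI)
  assume ic: "intersection_complete C"
  show "intersection_complete (f ` C)"
    unfolding intersection_complete_def
  proof (intro ballI)
    fix d1 d2 assume "d1 \<in> f ` C" "d2 \<in> f ` C"
    then obtain c1 c2 where c: "c1 \<in> C" "c2 \<in> C" "d1 = f c1" "d2 = f c2" by blast
    have "c1 \<inter> c2 \<in> C" using ic c unfolding intersection_complete_def by blast
    then have "f (\<Inter>{c1,c2}) = \<Inter>(f ` {c1,c2})"
      using key[OF assms(2,3), of "{c1,c2}"] c by simp
    then have "f (c1 \<inter> c2) = d1 \<inter> d2" using c by simp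
    then show "d1 \<inter> d2 \<in> f ` C" using \<open>c1 \<inter> c2 \<in> C\<close> by (metis image_eqI)
  qed
next
  assume mic: "max_intersection_complete C"
  have finC: "finite C" using assms(1) unfolding is_code_def
    by (meson finite_Pow_iff finite_atLeastAtMost finite_subset)
  show "max_intersection_complete (f ` C)"
    unfolding max_intersection_complete_def
  proof (intro allI impI)
    fix S assume S: "S \<subseteq> max_codewords (f ` C) \<and> S \<noteq> {}"
    define S' where "S' = {c \<in> max_codewords C. f c \<in> S}"
    have cover: "S = f ` S'"
    proof
      show "f ` S' \<subseteq> S" unfolding S'_def by blast
      show "S \<subseteq> f ` S'"
      proof
        fix s assume "s \<in> S"
        then have sm: "s \<in> max_codewords (f ` C)" using S by blast
        then obtain c where c: "c \<in> C" "s = f c" unfolding max_codewords_def by blast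
        obtain c' where c': "c' \<in> C" "c \<subseteq> c'" "\<forall>b\<in>C. c' \<subseteq> b \<longrightarrow> c' = b"
          using finite_has_maximal2[OF finC c(1)] by blast
        have "c' \<in> max_codewords C" using c' unfolding max_codewords_def by blast
        moreover have "f c \<subseteq> f c'" using monof[OF assms(2,3) c(1) c'(1,2)] .
        then have "f c' = s" using sm c c'(1) unfolding max_codewords_def by blast
        ultimately show "s \<in> f ` S'" using \<open>s \<in> S\<close> unfolding S'_def by blast
      qed
    qed
    have S'ne: "S' \<noteq> {}" using cover S by blast
    have S'sub: "S' \<subseteq> C" unfolding S'_def max_codewords_def by blast
    have "S' \<subseteq> max_codewords C" unfolding S'_def by blast
    then have "\<Inter>S' \<in> C" using mic S'ne unfolding max_intersection_complete_def by blast
    then have "f (\<Inter>S') = \<Inter>S" using key[OF assms(2,3) S'sub S'ne] cover by simp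
    then show "\<Inter>S \<in> f ` C" using \<open>\<Inter>S' \<in> C\<close> by (metis image_eqI)
  qed
qed

end
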